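(* Let \(S\) be an inverse semigroup with zero and unit, let \(E=E(S)\), and let \(\hat{E}\) carry the canonical action of \(S\) by the partial homeomorphisms \(c_g\colon U_{g^*g}\to U_{gg^*}\), \(c_g(\varphi)(e)=\varphi(g^*eg)\). Then this action is a terminal object in the category of actions of \(S\) on topological spaces: for every topological space \(X\) with an action of \(S\), there is a unique \(S\)-equivariant continuous map \(X\to\hat{E}\).
   Context: Inverse semigroups are assumed to have a zero \(0\) and a unit \(1\); homomorphisms preserve zero and unit. \(E=E(S)\) is the semilattice of idempotents of \(S\), ordered by \(e\le f\iff ef=e\). A character on \(E\) is a map \(\varphi\colon E\to\{0,1\}\) with \(\varphi(0)=0\), \(\varphi(1)=1\) and \(\varphi(ef)=\varphi(e)\varphi(f)\). \(\hat{E}\) is the set of characters. For \(e\in E\), \(U_e=\{\varphi\in\hat E:\varphi(e)=1\}\), and \(\hat{E}\) carries the topology generated by the sets \(U_e\). A partial homeomorphism of a space \(X\) is a homeomorphism between open subsets of \(X\). These form an inverse semigroup under composition of partial maps, with unit \(\mathrm{id}_X\) and zero the empty map. An action of \(S\) on a topological space \(X\) is a unit- and zero-preserving homomorphism from \(S\) to this inverse semigroup; write \(s\cdot x\) when defined. A map \(f\colon X\to Y\) between spaces with \(S\)-actions is \(S\)-equivariant if for all \(s\in S\), \(x\in X\): \(s\cdot x\) is defined iff \(s\cdot f(x)\) is defined, and then \(f(s\cdot x)=s\cdot f(x)\). *)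

theory Defs
  imports "HOL-Analysis.Analysis"
begin

text \<open>The inverse semigroup S is the whole type 's, with multiplication, unit 1 and zero 0
  from the type classes monoid_mult and mult_zero.  The inverse semigroup axiom
  (every element has a unique generalized inverse) is an explicit hypothesis.\<close>

definition inverse_semigroup_ax :: "'s::{monoid_mult,mult_zero} itself \<Rightarrow> bool" where
  "inverse_semigroup_ax _ \<longleftrightarrow> (\<forall>s::'s. \<exists>!t. s * t * s = s \<and> t * s * t = t)"

definition star :: "'s::monoid_mult \<Rightarrow> 's" where
  "star s = (THE t. s * t * s = s \<and> t * s * t = t)"

definition idems :: "'s::monoid_mult set" where
  "idems = {e. e * e = e}"

text \<open>Characters on E, represented as predicates on 's that vanish outside E.\<close>
definition characters :: "('s::{monoid_mult,mult_zero} \<Rightarrow> bool) set" where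
  "characters = {\<phi>. (\<forall>s. s \<notin> idems \<longrightarrow> \<not> \<phi> s) \<and> \<not> \<phi> 0 \<and> \<phi> 1 \<and>
                     (\<forall>e\<in>idems. \<forall>f\<in>idems. \<phi> (e * f) = (\<phi> e \<and> \<phi> f))}"

definition U_set :: "'s::{monoid_mult,mult_zero} \<Rightarrow> ('s \<Rightarrow> bool) set" where
  "U_set e = {\<phi> \<in> characters. \<phi> e}"

definition Ehat_top :: "('s::{monoid_mult,mult_zero} \<Rightarrow> bool) topology" where
  "Ehat_top = topology_generated_by {U_set e | e. e \<in> idems}"

text \<open>An action of S on X: partial maps (option-valued) that are homeomorphisms between
  open subsets of X; unit- and zero-preserving homomorphism to the inverse semigroup of
  partial homeomorphisms, product (s*t) acting as "first t, then s".\<close>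
definition is_action :: "'x topology \<Rightarrow> ('s::{monoid_mult,mult_zero} \<Rightarrow> 'x \<Rightarrow> 'x option) \<Rightarrow> bool" where
  "is_action X \<alpha> \<longleftrightarrow>
     (\<forall>s. dom (\<alpha> s) \<subseteq> topspace X \<and> openin X (dom (\<alpha> s)) \<and> openin X (ran (\<alpha> s)) \<and>
          homeomorphic_map (subtopology X (dom (\<alpha> s))) (subtopology X (ran (\<alpha> s)))
                           (\<lambda>x. the (\<alpha> s x))) \<and>
     (\<forall>x\<in>topspace X. \<alpha> 1 x = Some x) \<and>
     (\<forall>x. \<alpha> 0 x = None) \<and>
     (\<forall>s t x. \<alpha> (s * t) x = Option.bind (\<alpha> t x) (\<alpha> s))"

definition equivariant ::
  "'x topology \<Rightarrow> ('s \<Rightarrow> 'x \<Rightarrow> 'x option) \<Rightarrow> ('s \<Rightarrow> 'y \<Rightarrow> 'y option) \<Rightarrow> ('x \<Rightarrow> 'y) \<Rightarrow> bool" where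
  "equivariant X \<alpha> \<beta> f \<longleftrightarrow>
     (\<forall>s. \<forall>x\<in>topspace X. (\<alpha> s x \<noteq> None \<longleftrightarrow> \<beta> s (f x) \<noteq> None) \<and>
                        (\<alpha> s x \<noteq> None \<longrightarrow> \<beta> s (f x) = Some (f (the (\<alpha> s x)))))"

definition canon_action :: "'s::{monoid_mult,mult_zero} \<Rightarrow> ('s \<Rightarrow> bool) \<Rightarrow> ('s \<Rightarrow> bool) option" where
  "canon_action g \<phi> = (if \<phi> \<in> U_set (star g * g)
      then Some (\<lambda>e. e \<in> idems \<and> \<phi> (star g * e * g)) else None)"

end

theory Submission
  imports Defs
begin

context
  fixes ty :: "'s::{monoid_mult,mult_zero} itself"
  assumes A: "inverse_semigroup_ax TYPE('s)"
begin

lemma star_prop: "(s::'s) * star s * s = s \<and> star s * s * star s = star s"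
proof -
  have "\<exists>!t. s * t * s = s \<and> t * s * t = t" using A unfolding inverse_semigroup_ax_def by blast
  then show ?thesis unfolding star_def by (rule theI')
qed

lemma star1: "(s::'s) * star s * s = s" using star_prop by blast
lemma star2: "star (s::'s) * s * star s = star s" using star_prop by blast

lemma star_unique: "(s::'s) * t * s = s \<Longrightarrow> t * s * t = t \<Longrightarrow> star s = t"
proof -
  assume "s * t * s = s" "t * s * t = t"
  moreover have "\<exists>!t. s * t * s = s \<and> t * s * t = t" using A unfolding inverse_semigroup_ax_def by blast
  ultimately show ?thesis unfolding star_def by (intro the1_equality) auto
qed

lemma star_idem: "(e::'s) \<in> idems \<Longrightarrow> star e = e"
  unfolding idems_def by (intro star_unique) (simp_all add: mult.assoc)

lemma idem_prod: assumes "(e::'s) \<in> idems" "f \<in> idems" shows "e * f \<in> idems"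
proof -
  have ee: "e * e = e" and ff: "f * f = f" using assms unfolding idems_def by auto
  define a where "a = e * f"
  define b where "b = star a"
  have aba: "a * b * a = a" and bab: "b * a * b = b" unfolding b_def using star_prop by auto
  define c where "c = f * b * e"
  have "a * c * a = e * (f * f) * b * (e * e) * f" unfolding a_def c_def by (simp add: mult.assoc)
  also have "\<dots> = a * b * a" unfolding a_def ee ff by (simp add: mult.assoc)
  finally have aca: "a * c * a = a" using aba by simp
  have "c * a * c = f * (b * (e * e) * (f * f) * b) * e" unfolding a_def c_def by (simp add: mult.assoc)
  also have "\<dots> = f * (b * a * b) * e" unfolding a_def by (simp add: ee ff mult.assoc)
  also have "\<dots> = c" using bab unfolding c_def by simp
  finally have cac: "c * a * c = c" .
  have bc: "b = c" unfolding b_def using star_unique[OF aca cac] .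
  have "b * b = c * c" using bc by simp
  also have "\<dots> = f * (b * a * b) * e" unfolding c_def a_def by (simp add: mult.assoc)
  also have "\<dots> = c" using bab unfolding c_def by simp
  finally have bb: "b * b = b" using bc by simp
  have "star b = b" using bb by (intro star_unique) (simp_all add: mult.assoc)
  moreover have "star b = a" using aba bab by (intro star_unique) simp_all
  ultimately have "a = b" by simp
  then show ?thesis using bb unfolding idems_def a_def by simp
qed

lemma idem_comm: assumes "(e::'s) \<in> idems" "f \<in> idems" shows "e * f = f * e"
proof -
  have ee: "e * e = e" and ff: "f * f = f" using assms unfolding idems_def by auto
  have ef: "e * f \<in> idems" and fe: "f * e \<in> idems" using idem_prod assms by auto
  have s: "star (e * f) = e * f" using star_idem[OF ef] .
  have 1: "(e * f) * (f * e) * (e * f) = e * f"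
  proof -
    have "(e * f) * (f * e) * (e * f) = e * (f * f) * (e * e) * f" by (simp add: mult.assoc)
    also have "\<dots> = (e * f) * (e * f)" by (simp add: ee ff mult.assoc)
    finally show ?thesis using ef unfolding idems_def by simp
  qed
  have 2: "(f * e) * (e * f) * (f * e) = f * e"
  proof -
    have "(f * e) * (e * f) * (f * e) = f * (e * e) * (f * f) * e" by (simp add: mult.assoc)
    also have "\<dots> = (f * e) * (f * e)" by (simp add: ee ff mult.assoc)
    finally show ?thesis using fe unfolding idems_def by simp
  qed
  have "star (e * f) = f * e" using star_unique[OF 1 2] .
  then show ?thesis using s by simp
qed

lemma idem_ss: "(s::'s) * star s \<in> idems"
proof -
  have "s * star s * (s * star s) = (s * star s * s) * star s" by (simp add: mult.assoc)
  then show ?thesis using star1[of s] by (simp add: idems_def)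
qed
lemma idem_ss': "star (s::'s) * s \<in> idems"
proof -
  have "star s * s * (star s * s) = (star s * s * star s) * s" by (simp add: mult.assoc)
  then show ?thesis using star2[of s] by (simp add: idems_def)
qed

lemma star_star: "star (star (s::'s)) = s"
  using star1[of s] star2[of s] by (intro star_unique) auto

lemma idem_conj: assumes "(e::'s) \<in> idems" shows "star s * e * s \<in> idems"
proof -
  have ee: "e * e = e" using assms unfolding idems_def by auto
  have "(star s * e * s) * (star s * e * s) = star s * (e * (s * star s)) * e * s" by (simp add: mult.assoc)
  also have "\<dots> = star s * (s * star s) * (e * e) * s" using idem_comm[OF assms idem_ss] by (simp add: mult.assoc)
  also have "\<dots> = star s * e * s" using star2[of s] ee by (simp add: mult.assoc)
  finally show ?thesis by (simp add: idems_def)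
qed

lemma star_mult: "star ((s::'s) * t) = star t * star s"
proof (rule star_unique)
  have c: "(star s * s) * (t * star t) = (t * star t) * (star s * s)" using idem_comm idem_ss idem_ss' by blast
  have "s * t * (star t * star s) * (s * t) = s * ((t * star t) * (star s * s)) * t" by (simp add: mult.assoc)
  also have "\<dots> = s * ((star s * s) * (t * star t)) * t" using c by simp
  also have "\<dots> = (s * star s * s) * (t * star t * t)" by (simp add: mult.assoc)
  finally show "s * t * (star t * star s) * (s * t) = s * t" using star1 by simp
  have "star t * star s * (s * t) * (star t * star s) = star t * ((star s * s) * (t * star t)) * star s" by (simp add: mult.assoc)
  also have "\<dots> = star t * ((t * star t) * (star s * s)) * star s" using c by simp
  also have "\<dots> = (star t * t * star t) * (star s * s * star s)" by (simp add: mult.assoc)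
  finally show "star t * star s * (s * t) * (star t * star s) = star t * star s" using star2 by simp
qed

lemma idem_1: "(1::'s) \<in> idems" by (simp add: idems_def)
lemma idem_0: "(0::'s) \<in> idems" by (simp add: idems_def)


lemma char_mult: "\<phi> \<in> characters \<Longrightarrow> (e::'s) \<in> idems \<Longrightarrow> f \<in> idems \<Longrightarrow> \<phi> (e * f) = (\<phi> e \<and> \<phi> f)"
  unfolding characters_def by blast
lemma char_idem: "\<phi> \<in> characters \<Longrightarrow> \<phi> (s::'s) \<Longrightarrow> s \<in> idems"
  unfolding characters_def by blast

lemma Union_U: "\<Union>{U_set e | e::'s. e \<in> idems} = characters"
  using idem_1 by (auto simp: U_set_def characters_def)

lemma topspace_Ehat: "topspace (Ehat_top :: ('s \<Rightarrow> bool) topology) = characters"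
  unfolding Ehat_top_def topology_generated_by_topspace using Union_U .

lemma U_open: "(e::'s) \<in> idems \<Longrightarrow> openin Ehat_top (U_set e)"
  unfolding Ehat_top_def by (rule topology_generated_by_Basis) blast

definition cmap :: "'s \<Rightarrow> ('s \<Rightarrow> bool) \<Rightarrow> ('s \<Rightarrow> bool)" where
  "cmap s \<phi> = (\<lambda>e. e \<in> idems \<and> \<phi> (star s * e * s))"

lemma canon_eq: "canon_action s \<phi> = (if \<phi> \<in> U_set (star s * s) then Some (cmap s \<phi>) else None)"
  unfolding canon_action_def cmap_def by simp

lemma cmap_char: assumes "\<phi> \<in> U_set (star (s::'s) * s)" shows "cmap s \<phi> \<in> U_set (s * star s)"
proof -
  have ph: "\<phi> \<in> characters" "\<phi> (star s * s)" using assms by (auto simp: U_set_def)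
  have m: "cmap s \<phi> (e * f) = (cmap s \<phi> e \<and> cmap s \<phi> f)" if "e \<in> idems" "f \<in> idems" for e f
  proof -
    have "star s * e * s * (star s * f * s) = star s * (e * (s * star s)) * f * s" by (simp add: mult.assoc)
    also have "\<dots> = star s * (s * star s) * e * f * s" using idem_comm[OF that(1) idem_ss] by (simp add: mult.assoc)
    also have "\<dots> = star s * (e * f) * s" using star2[of s] by (simp add: mult.assoc)
    finally have eq: "star s * e * s * (star s * f * s) = star s * (e * f) * s" .
    show ?thesis unfolding cmap_def using char_mult[OF ph(1) idem_conj[OF that(1), of s] idem_conj[OF that(2), of s]]
      eq idem_prod[OF that] that by simp
  qed
  have "cmap s \<phi> \<in> characters"
    unfolding characters_def using m ph idem_1 char_idem[OF ph(1), of 0] characters_def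
    by (auto simp: cmap_def)
  moreover have "cmap s \<phi> (s * star s)"
    unfolding cmap_def using idem_ss[of s] ph star2[of s] by (simp add: mult.assoc)
  ultimately show ?thesis by (simp add: U_set_def)
qed

lemma cmap_inv: assumes "\<phi> \<in> U_set (star (s::'s) * s)" shows "cmap (star s) (cmap s \<phi>) = \<phi>"
proof
  fix e
  have ph: "\<phi> \<in> characters" "\<phi> (star s * s)" using assms by (auto simp: U_set_def)
  show "cmap (star s) (cmap s \<phi>) e = \<phi> e"
  proof (cases "e \<in> idems")
    case True
    have c: "star s * s * e = e * (star s * s)" using idem_comm[OF True idem_ss'] by simp
    have "star s * (s * e * star s) * s = (star s * s) * e * (star s * s)" by (simp add: mult.assoc)
    also have "\<dots> = e * ((star s * s) * (star s * s))" using c by (simp add: mult.assoc)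
    also have "\<dots> = e * (star s * s)" using idem_ss'[of s] by (simp add: idems_def)
    finally have eq: "star s * (s * e * star s) * s = e * (star s * s)" .
    have "s * e * star s \<in> idems" using idem_conj[OF True, of "star s"] star_star by simp
    then show ?thesis unfolding cmap_def using True star_star[of s] eq
      char_mult[OF ph(1) True idem_ss'] ph by simp
  next
    case False
    then show ?thesis unfolding cmap_def using char_idem[OF ph(1)] by auto
  qed
qed

lemma dom_canon: "dom (canon_action (s::'s)) = U_set (star s * s)"
  by (auto simp: canon_eq dom_def split: if_splits)

lemma ran_canon: "ran (canon_action (s::'s)) = U_set (s * star s)"
proof
  show "ran (canon_action s) \<subseteq> U_set (s * star s)"
    using cmap_char by (auto simp: canon_eq ran_def split: if_splits)
  show "U_set (s * star s) \<subseteq> ran (canon_action s)"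
  proof
    fix \<psi> assume p: "\<psi> \<in> U_set (s * star s)"
    then have p': "\<psi> \<in> U_set (star (star s) * star s)" using star_star by simp
    have "cmap s (cmap (star s) \<psi>) = \<psi>" using cmap_inv[OF p'] star_star[of s] by simp
    moreover have "cmap (star s) \<psi> \<in> U_set (star s * s)" using cmap_char[OF p'] star_star[of s] by simp
    ultimately show "\<psi> \<in> ran (canon_action s)" unfolding ran_def canon_eq by force
  qed
qed

lemma U_int: "(e::'s) \<in> idems \<Longrightarrow> f \<in> idems \<Longrightarrow> U_set e \<inter> U_set f = U_set (e * f)"
  by (auto simp: U_set_def char_mult)

lemma cont_canon: "continuous_map (subtopology Ehat_top (U_set (star (s::'s) * s)))
   (subtopology Ehat_top (U_set (s * star s))) (\<lambda>\<phi>. the (canon_action s \<phi>))"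
proof -
  have sub: "U_set (star s * s) \<subseteq> topspace Ehat_top" using topspace_Ehat by (auto simp: U_set_def)
  have "continuous_map (subtopology Ehat_top (U_set (star s * s))) (topology_generated_by {U_set e | e::'s. e \<in> idems}) (\<lambda>\<phi>. the (canon_action s \<phi>))"
  proof (rule continuous_on_generated_topo)
    fix U assume "U \<in> {U_set e | e::'s. e \<in> idems}"
    then obtain e where e: "e \<in> idems" "U = U_set e" by blast
    have "(\<lambda>\<phi>. the (canon_action s \<phi>)) -` U \<inter> topspace (subtopology Ehat_top (U_set (star s * s)))
        = U_set (star s * e * s) \<inter> U_set (star s * s)"
    proof -
      have "\<And>\<phi>. \<phi> \<in> U_set (star s * s) \<Longrightarrow> (cmap s \<phi> \<in> U_set e) = \<phi> (star s * e * s)"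
        using cmap_char e(1) by (auto simp: U_set_def cmap_def)
      then show ?thesis using sub e by (auto simp: canon_eq U_set_def)
    qed
    moreover have "openin Ehat_top (U_set (star s * e * s))" using U_open idem_conj e(1) by blast
    ultimately show "openin (subtopology Ehat_top (U_set (star s * s))) ((\<lambda>\<phi>. the (canon_action s \<phi>)) -` U \<inter> topspace (subtopology Ehat_top (U_set (star s * s))))"
      unfolding openin_subtopology by blast
  next
    show "(\<lambda>\<phi>. the (canon_action s \<phi>)) ` topspace (subtopology Ehat_top (U_set (star s * s))) \<subseteq> \<Union> {U_set e |e. e \<in> idems}"
      unfolding Union_U using cmap_char sub by (auto simp: canon_eq U_set_def)
  qed
  then have c1: "continuous_map (subtopology Ehat_top (U_set (star s * s))) Ehat_top (\<lambda>\<phi>. the (canon_action s \<phi>))"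
    unfolding Ehat_top_def .
  have c2: "(\<lambda>\<phi>. the (canon_action s \<phi>)) \<in> topspace (subtopology Ehat_top (U_set (star s * s))) \<rightarrow> U_set (s * star s)"
  proof
    fix \<phi> assume "\<phi> \<in> topspace (subtopology Ehat_top (U_set (star s * s)))"
    then have p: "\<phi> \<in> U_set (star s * s)" by simp
    show "the (canon_action s \<phi>) \<in> U_set (s * star s)" using cmap_char[OF p] p by (simp add: canon_eq)
  qed
  show ?thesis unfolding continuous_map_in_subtopology using c1 c2 by (rule conjI)
qed

lemma homeo_canon: "homeomorphic_map (subtopology Ehat_top (dom (canon_action (s::'s))))
   (subtopology Ehat_top (ran (canon_action s))) (\<lambda>\<phi>. the (canon_action s \<phi>))"
  unfolding homeomorphic_map_maps dom_canon ran_canon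
proof (intro exI[of _ "\<lambda>\<phi>. the (canon_action (star s) \<phi>)"])
  have sub: "U_set (star s * s) \<subseteq> topspace Ehat_top" "U_set (s * star s) \<subseteq> topspace Ehat_top"
    using topspace_Ehat by (auto simp: U_set_def)
  have c2: "continuous_map (subtopology Ehat_top (U_set (s * star s)))
   (subtopology Ehat_top (U_set (star s * s))) (\<lambda>\<phi>. the (canon_action (star s) \<phi>))"
    using cont_canon[of "star s"] star_star[of s] by simp
  show "homeomorphic_maps (subtopology Ehat_top (U_set (star s * s))) (subtopology Ehat_top (U_set (s * star s)))
     (\<lambda>\<phi>. the (canon_action s \<phi>)) (\<lambda>\<phi>. the (canon_action (star s) \<phi>))"
    unfolding homeomorphic_maps_def
  proof (intro conjI ballI cont_canon c2)
    fix x assume "x \<in> topspace (subtopology Ehat_top (U_set (star s * s)))"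
    then have x: "x \<in> U_set (star s * s)" by simp
    then have "cmap s x \<in> U_set (star (star s) * star s)" using cmap_char star_star by simp
    then show "the (canon_action (star s) (the (canon_action s x))) = x"
      using x cmap_inv[OF x] by (simp add: canon_eq)
  next
    fix x assume "x \<in> topspace (subtopology Ehat_top (U_set (s * star s)))"
    then have x: "x \<in> U_set (star (star s) * star s)" using star_star by simp
    then have "cmap (star s) x \<in> U_set (star s * s)" using cmap_char star_star by (metis)
    then show "the (canon_action s (the (canon_action (star s) x))) = x"
      using x cmap_inv[OF x] star_star[of s] by (simp add: canon_eq)
  qed
qed


lemma star_1: "star (1::'s) = 1" using star_idem idem_1 by blast
lemma star_0: "star (0::'s) = 0" using star_idem idem_0 by blast

lemma canon_is_action: "is_action (Ehat_top :: ('s \<Rightarrow> bool) topology) canon_action"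
  unfolding is_action_def
proof (intro conjI allI ballI)
  fix s :: 's
  show "dom (canon_action s) \<subseteq> topspace Ehat_top" unfolding dom_canon topspace_Ehat by (auto simp: U_set_def)
  show "openin Ehat_top (dom (canon_action s))" unfolding dom_canon using U_open idem_ss' by blast
  show "openin Ehat_top (ran (canon_action s))" unfolding ran_canon using U_open idem_ss by blast
  show "homeomorphic_map (subtopology Ehat_top (dom (canon_action s))) (subtopology Ehat_top (ran (canon_action s)))
          (\<lambda>x. the (canon_action s x))" by (rule homeo_canon)
next
  fix x :: "'s \<Rightarrow> bool" assume "x \<in> topspace Ehat_top"
  then have x: "x \<in> characters" using topspace_Ehat by simp
  have "cmap 1 x = x" unfolding cmap_def star_1 using char_idem[OF x] by (auto simp: fun_eq_iff)
  moreover have "x \<in> U_set (star 1 * 1)" using x by (simp add: star_1 U_set_def characters_def)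
  ultimately show "canon_action 1 x = Some x" by (simp add: canon_eq)
next
  fix x :: "'s \<Rightarrow> bool"
  show "canon_action 0 x = None" by (auto simp: canon_eq star_0 U_set_def characters_def)
next
  fix s t :: 's and \<phi> :: "'s \<Rightarrow> bool"
  show "canon_action (s * t) \<phi> = Option.bind (canon_action t \<phi>) (canon_action s)"
  proof (cases "\<phi> \<in> characters")
    case False
    then show ?thesis by (simp add: canon_eq U_set_def)
  next
    case ph: True
    have i1: "star t * (star s * s) * t \<in> idems" using idem_conj idem_ss' by blast
    have e1: "star (s * t) * (s * t) = star t * (star s * s) * t" by (simp add: star_mult mult.assoc)
    show ?thesis
    proof (cases "\<phi> (star t * t)")
      case False
      have "star t * (star s * s) * t * (star t * t) = star t * (star s * s) * (t * star t * t)" by (simp add: mult.assoc)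
      then have "star t * (star s * s) * t * (star t * t) = star t * (star s * s) * t" using star1[of t] by simp
      then have "\<not> \<phi> (star t * (star s * s) * t)" using char_mult[OF ph i1 idem_ss'[of t]] False by simp
      then show ?thesis using False by (simp add: canon_eq U_set_def e1)
    next
      case True
      then have u: "\<phi> \<in> U_set (star t * t)" using ph by (simp add: U_set_def)
      have cc: "cmap t \<phi> \<in> characters" using cmap_char[OF u] by (simp add: U_set_def)
      have "cmap t \<phi> (star s * s) = \<phi> (star t * (star s * s) * t)" by (simp add: cmap_def idem_ss')
      moreover have "cmap s (cmap t \<phi>) = cmap (s * t) \<phi>"
      proof -
        have ic: "\<And>e. e \<in> idems \<Longrightarrow> star s * (e * s) \<in> idems" using idem_conj by (simp add: mult.assoc)
        show ?thesis by (auto simp: cmap_def fun_eq_iff star_mult mult.assoc ic)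
      qed
      ultimately show ?thesis using u cc ph by (simp add: canon_eq U_set_def e1)
    qed
  qed
qed


lemma act_idem:
  assumes act: "is_action X (\<alpha> :: 's \<Rightarrow> 'x \<Rightarrow> 'x option)" and e: "e \<in> idems" and a: "\<alpha> e x = Some y"
  shows "y = x"
proof -
  have ee: "e * e = e" using e by (simp add: idems_def)
  have "\<alpha> (e * e) x = Option.bind (\<alpha> e x) (\<alpha> e)" using act by (simp add: is_action_def)
  then have ay: "\<alpha> e y = Some y" using a ee by simp
  have inj: "inj_on (\<lambda>x. the (\<alpha> e x)) (topspace (subtopology X (dom (\<alpha> e))))"
    using act homeomorphic_imp_injective_map unfolding is_action_def by blast
  have sub: "dom (\<alpha> e) \<subseteq> topspace X" using act by (simp add: is_action_def)
  have "x \<in> dom (\<alpha> e)" "y \<in> dom (\<alpha> e)" using a ay by auto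
  then show ?thesis using inj sub a ay unfolding inj_on_def
    by (metis Int_absorb1 option.sel topspace_subtopology)
qed

lemma act_inv:
  assumes act: "is_action X (\<alpha> :: 's \<Rightarrow> 'x \<Rightarrow> 'x option)" and a: "\<alpha> s x = Some y"
  shows "\<alpha> (star s) y \<noteq> None"
proof -
  have m: "\<And>s t x. \<alpha> (s * t) x = Option.bind (\<alpha> t x) (\<alpha> s)" using act by (simp add: is_action_def)
  have "\<alpha> ((s * star s) * s) x = \<alpha> s x" using star1[of s] by simp
  then have "Option.bind (\<alpha> (star s) y) (\<alpha> s) = Some y" using a m[of "s * star s" s x] m[of s "star s" y] by simp
  then show ?thesis by (cases "\<alpha> (star s) y") auto
qed

definition fmap :: "('s \<Rightarrow> 'x \<Rightarrow> 'x option) \<Rightarrow> 'x \<Rightarrow> ('s \<Rightarrow> bool)" where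
  "fmap \<alpha> x = (\<lambda>e. e \<in> idems \<and> \<alpha> e x \<noteq> None)"

lemma universal:
  assumes act: "is_action X (\<alpha> :: 's \<Rightarrow> 'x \<Rightarrow> 'x option)"
  shows "\<exists>f. continuous_map X Ehat_top f \<and> equivariant X \<alpha> canon_action f \<and>
            (\<forall>g. continuous_map X Ehat_top g \<and> equivariant X \<alpha> canon_action g \<longrightarrow>
                 (\<forall>x\<in>topspace X. g x = f x))"
proof (intro exI conjI allI impI ballI)
  have m: "\<And>s t x. \<alpha> (s * t) x = Option.bind (\<alpha> t x) (\<alpha> s)" using act by (simp add: is_action_def)
  have one: "\<And>x. x \<in> topspace X \<Longrightarrow> \<alpha> 1 x = Some x" using act by (simp add: is_action_def)
  have zero: "\<And>x. \<alpha> 0 x = None" using act by (simp add: is_action_def)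
  have fchar: "fmap \<alpha> x \<in> characters" if x: "x \<in> topspace X" for x
  proof -
    have "(\<alpha> (e * f) x \<noteq> None) = (\<alpha> e x \<noteq> None \<and> \<alpha> f x \<noteq> None)" if "e \<in> idems" "f \<in> idems" for e f
    proof (cases "\<alpha> f x")
      case None then show ?thesis by (simp add: m)
    next
      case (Some y)
      then have "y = x" using act_idem[OF act that(2)] by simp
      then show ?thesis using Some by (simp add: m)
    qed
    note mm = this
    show ?thesis unfolding characters_def
    proof (intro CollectI conjI allI impI ballI)
      show "\<And>s. s \<notin> idems \<Longrightarrow> \<not> fmap \<alpha> x s" by (simp add: fmap_def)
      show "\<not> fmap \<alpha> x 0" by (simp add: fmap_def zero)
      show "fmap \<alpha> x 1" by (simp add: fmap_def idem_1 one[OF x])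
      show "\<And>e f. e \<in> idems \<Longrightarrow> f \<in> idems \<Longrightarrow> fmap \<alpha> x (e * f) = (fmap \<alpha> x e \<and> fmap \<alpha> x f)"
        using mm idem_prod by (simp add: fmap_def)
    qed
  qed
  show "continuous_map X Ehat_top (fmap \<alpha>)"
    unfolding Ehat_top_def
  proof (rule continuous_on_generated_topo)
    fix U assume "U \<in> {U_set e | e::'s. e \<in> idems}"
    then obtain e where e: "e \<in> idems" "U = U_set e" by blast
    have sub: "dom (\<alpha> e) \<subseteq> topspace X" using act by (simp add: is_action_def)
    have "fmap \<alpha> -` U \<inter> topspace X = dom (\<alpha> e)"
      using e sub fchar by (auto simp: U_set_def fmap_def)
    then show "openin X (fmap \<alpha> -` U \<inter> topspace X)" using act by (simp add: is_action_def)
  next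
    show "fmap \<alpha> ` topspace X \<subseteq> \<Union> {U_set e |e::'s. e \<in> idems}" unfolding Union_U using fchar by auto
  qed
  show "equivariant X \<alpha> canon_action (fmap \<alpha>)"
    unfolding equivariant_def
  proof (intro allI ballI conjI impI)
    fix s x assume x: "x \<in> topspace X"
    have "(\<alpha> s x \<noteq> None) = (\<alpha> (star s * s) x \<noteq> None)"
    proof (cases "\<alpha> s x")
      case None then show ?thesis by (simp add: m)
    next
      case (Some y) then show ?thesis using act_inv[OF act Some] by (simp add: m)
    qed
    then show "(\<alpha> s x \<noteq> None) = (canon_action s (fmap \<alpha> x) \<noteq> None)"
      using fchar[OF x] by (simp add: canon_eq U_set_def fmap_def idem_ss')
    assume "\<alpha> s x \<noteq> None"
    then obtain y where y: "\<alpha> s x = Some y" by auto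
    have "cmap s (fmap \<alpha> x) e = fmap \<alpha> y e" for e
    proof (cases "e \<in> idems")
      case True
      have "\<alpha> (star s * e * s) x = Option.bind (\<alpha> e y) (\<alpha> (star s))" using y by (simp add: m)
      moreover have "\<alpha> e y \<noteq> None \<Longrightarrow> Option.bind (\<alpha> e y) (\<alpha> (star s)) \<noteq> None"
        using act_idem[OF act True] act_inv[OF act y] by fastforce
      moreover have "Option.bind (\<alpha> e y) (\<alpha> (star s)) \<noteq> None \<Longrightarrow> \<alpha> e y \<noteq> None"
        by (cases "\<alpha> e y") auto
      ultimately show ?thesis using True idem_conj[OF True, of s] by (auto simp: cmap_def fmap_def)
    next
      case False then show ?thesis by (simp add: cmap_def fmap_def)
    qed
    then have ce: "cmap s (fmap \<alpha> x) = fmap \<alpha> y" by (rule ext)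
    have "\<alpha> (star s * s) x \<noteq> None" using act_inv[OF act y] y by (simp add: m)
    then have fx: "fmap \<alpha> x \<in> U_set (star s * s)" using fchar[OF x] by (simp add: U_set_def fmap_def idem_ss')
    show "canon_action s (fmap \<alpha> x) = Some (fmap \<alpha> (the (\<alpha> s x)))"
      unfolding canon_eq using fx ce y by simp
  qed
  fix g x assume g: "continuous_map X Ehat_top g \<and> equivariant X \<alpha> canon_action g" and x: "x \<in> topspace X"
  have gc: "g x \<in> characters" using continuous_map_image_subset_topspace[of X Ehat_top g] g x topspace_Ehat by blast
  show "g x = fmap \<alpha> x"
  proof
    fix e
    show "g x e = fmap \<alpha> x e"
    proof (cases "e \<in> idems")
      case True
      have "(\<alpha> e x \<noteq> None) = (canon_action e (g x) \<noteq> None)" using g x unfolding equivariant_def by blast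
      also have "\<dots> = g x e" using gc True star_idem[OF True] by (simp add: canon_eq U_set_def idems_def)
      finally show ?thesis using True by (simp add: fmap_def)
    next
      case False then show ?thesis using gc char_idem by (auto simp: fmap_def)
    qed
  qed
qed

end

theorem theorem2p22:
  assumes "inverse_semigroup_ax TYPE('s::{monoid_mult,mult_zero})"
  shows "is_action (Ehat_top :: ('s \<Rightarrow> bool) topology) canon_action \<and>
    (\<forall>(X :: 'x topology) \<alpha>. is_action X (\<alpha> :: 's \<Rightarrow> 'x \<Rightarrow> 'x option) \<longrightarrow>
       (\<exists>f. continuous_map X Ehat_top f \<and> equivariant X \<alpha> canon_action f \<and>
            (\<forall>g. continuous_map X Ehat_top g \<and> equivariant X \<alpha> canon_action g \<longrightarrow>
                 (\<forall>x\<in>topspace X. g x = f x))))"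
  using canon_is_action[OF assms] universal[OF assms] by blast

end
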